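(* Let $h:[u]\to[t]$ be a 5-independent hash function, where $t$ is a power of two, and let $S\subseteq[u]$ be a set of $n$ keys with $t\ge\frac32 n$, stored in a linear probing table of size $t$ using $h$. Then for any key $q\in[u]$, the expected time to search, insert or delete $q$ is $O(1)$; equivalently, the expected number of positions from $h(q)$ up to the first empty position at or after $h(q)$ is bounded by an absolute constant.
   Context: Let $[s]=\{0,\dots,s-1\}$. A random hash function $h:[u]\to[t]$ is $k$-independent if for any distinct keys $x_0,\dots,x_{k-1}\in[u]$ and any $y_0,\dots,y_{k-1}\in[t]$, $\Pr[h(x_0)=y_0\wedge\dots\wedge h(x_{k-1})=y_{k-1}]=1/t^k$. Linear probing: a table of size $t$ with hash function $h$; positions are indexed by nonnegative integers (wrap-around ignored), each either empty or holding one key. Keys of $S$ are inserted starting from an empty table; a key $x$ is inserted by scanning positions $h(x),h(x)+1,\dots$ and placing $x$ in the first empty one. Search, insertion and deletion of a key $x$ take time at most proportional to the number of positions from $h(x)$ to the first empty position at or after $h(x)$. *)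

theory Defs
  imports "HOL-Probability.Probability"
begin

text \<open>A random hash function is a probability distribution (pmf) over functions
  nat \<Rightarrow> nat; keys are [u] = {..<u}, hash values [t] = {..<t}.\<close>

definition k_independent :: "nat \<Rightarrow> nat \<Rightarrow> nat \<Rightarrow> (nat \<Rightarrow> nat) pmf \<Rightarrow> bool" where
  "k_independent k u t H \<longleftrightarrow>
     (\<forall>xs ys. length xs = k \<and> length ys = k \<and> distinct xs \<and>
        set xs \<subseteq> {..<u} \<and> set ys \<subseteq> {..<t} \<longrightarrow>
        measure_pmf.prob H {h. \<forall>i<k. h (xs ! i) = ys ! i} = 1 / real t ^ k)"

text \<open>A linear probing table: positions are natural numbers (no wrap-around),
  each either empty (None) or holding one key.\<close>
type_synonym lp_table = "nat \<Rightarrow> nat option"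

definition first_empty :: "lp_table \<Rightarrow> nat \<Rightarrow> nat" where
  "first_empty T p = (LEAST i. p \<le> i \<and> T i = None)"

definition lp_insert :: "(nat \<Rightarrow> nat) \<Rightarrow> lp_table \<Rightarrow> nat \<Rightarrow> lp_table" where
  "lp_insert h T x = T(first_empty T (h x) := Some x)"

definition lp_build :: "(nat \<Rightarrow> nat) \<Rightarrow> nat list \<Rightarrow> lp_table" where
  "lp_build h xs = foldl (lp_insert h) (\<lambda>_. None) xs"

definition lp_cost :: "(nat \<Rightarrow> nat) \<Rightarrow> nat list \<Rightarrow> nat \<Rightarrow> nat" where
  "lp_cost h xs q = first_empty (lp_build h xs) (h q) - h q + 1"

end

theory Submission
  imports Defs
begin
lemma lp_build_snoc: "lp_build h (xs @ [x]) = lp_insert h (lp_build h xs) x"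
  by (simp add: lp_build_def)

lemma fe_props:
  assumes "finite {j. T j \<noteq> None}"
  shows "p \<le> first_empty T p \<and> T (first_empty T p) = None \<and>
         (\<forall>i. p \<le> i \<and> i < first_empty T p \<longrightarrow> T i \<noteq> None)"
proof -
  define m where "m = Suc (Max (insert p {j. T j \<noteq> None}))"
  have "p \<le> m \<and> T m = None"
  proof
    show "p \<le> m" using assms unfolding m_def by (simp add: le_SucI)
    show "T m = None"
    proof (rule ccontr)
      assume "T m \<noteq> None"
      hence "m \<le> Max (insert p {j. T j \<noteq> None})" using assms by (intro Max_ge) auto
      thus False unfolding m_def by simp
    qed
  qed
  hence ex: "\<exists>i. p \<le> i \<and> T i = None" by blast
  show ?thesis unfolding first_empty_def
    using LeastI_ex[OF ex] not_less_Least[of _ "\<lambda>i. p \<le> i \<and> T i = None"] by auto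
qed

definition lp_inv :: "(nat \<Rightarrow> nat) \<Rightarrow> nat list \<Rightarrow> lp_table \<Rightarrow> bool" where
  "lp_inv h xs T \<longleftrightarrow> finite {j. T j \<noteq> None} \<and>
     (\<forall>j x. T j = Some x \<longrightarrow> x \<in> set xs \<and> h x \<le> j \<and> (\<forall>i. h x \<le> i \<and> i < j \<longrightarrow> T i \<noteq> None)) \<and>
     (\<forall>j j' x. T j = Some x \<and> T j' = Some x \<longrightarrow> j = j')"

lemma lp_inv_build: "distinct xs \<Longrightarrow> lp_inv h xs (lp_build h xs)"
proof (induction xs rule: rev_induct)
  case Nil
  show ?case by (simp add: lp_inv_def lp_build_def)
next
  case (snoc x xs)
  define T where "T = lp_build h xs"
  have I: "lp_inv h xs T" using snoc by (simp add: T_def)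
  have I1: "finite {j. T j \<noteq> None}" using I unfolding lp_inv_def by blast
  have I2: "\<And>j y. T j = Some y \<Longrightarrow> y \<in> set xs \<and> h y \<le> j \<and> (\<forall>i. h y \<le> i \<and> i < j \<longrightarrow> T i \<noteq> None)"
    using I unfolding lp_inv_def by blast
  have I3: "\<And>j j' y. T j = Some y \<Longrightarrow> T j' = Some y \<Longrightarrow> j = j'"
    using I unfolding lp_inv_def by blast
  have xn: "x \<notin> set xs" using snoc.prems by simp
  define f where "f = first_empty T (h x)"
  have F: "h x \<le> f \<and> T f = None \<and> (\<forall>i. h x \<le> i \<and> i < f \<longrightarrow> T i \<noteq> None)"
    using fe_props[OF I1, of "h x"] unfolding f_def by blast
  have eq: "lp_build h (xs @ [x]) = T(f := Some x)"
    by (simp add: lp_build_snoc lp_insert_def T_def f_def)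
  have fin: "finite {j. (T(f := Some x)) j \<noteq> None}"
  proof -
    have "{j. (T(f := Some x)) j \<noteq> None} \<subseteq> insert f {j. T j \<noteq> None}" by auto
    thus ?thesis using I1 by (meson finite_insert finite_subset)
  qed
  have P2: "\<forall>j y. (T(f := Some x)) j = Some y \<longrightarrow> y \<in> set (xs @ [x]) \<and> h y \<le> j \<and> (\<forall>i. h y \<le> i \<and> i < j \<longrightarrow> (T(f := Some x)) i \<noteq> None)"
  proof (intro allI impI)
    fix j y assume a: "(T(f := Some x)) j = Some y"
    show "y \<in> set (xs @ [x]) \<and> h y \<le> j \<and> (\<forall>i. h y \<le> i \<and> i < j \<longrightarrow> (T(f := Some x)) i \<noteq> None)"
    proof (cases "j = f")
      case True
      then have "y = x" using a by simp
      then show ?thesis using F True by simp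
    next
      case False
      then have "T j = Some y" using a by simp
      from I2[OF this] show ?thesis by simp
    qed
  qed
  have P3: "\<forall>j j' y. (T(f := Some x)) j = Some y \<and> (T(f := Some x)) j' = Some y \<longrightarrow> j = j'"
  proof (intro allI impI)
    fix j j' y assume a: "(T(f := Some x)) j = Some y \<and> (T(f := Some x)) j' = Some y"
    show "j = j'"
    proof (cases "j = f")
      case True
      show ?thesis
      proof (rule ccontr)
        assume "j \<noteq> j'"
        then have "T j' = Some x" using a True by simp
        then show False using I2 xn by blast
      qed
    next
      case False
      then have Tj: "T j = Some y" using a by simp
      show ?thesis
      proof (cases "j' = f")
        case True
        then have "y = x" using a by simp
        then show ?thesis using Tj I2 xn by blast
      next
        case False
        then have "T j' = Some y" using a by simp
        then show ?thesis using I3 Tj by blast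
      qed
    qed
  qed
  show ?case unfolding eq lp_inv_def using fin P2 P3 by blast
qed

lemma run_lemma:
  assumes "distinct xs"
  shows "\<exists>a\<le>p. \<forall>s. a \<le> s \<and> s \<le> first_empty (lp_build h xs) p \<longrightarrow>
            s - a \<le> card {x\<in>set xs. a \<le> h x \<and> h x < s}"
proof -
  define T where "T = lp_build h xs"
  have I: "lp_inv h xs T" using lp_inv_build[OF assms] by (simp add: T_def)
  have I1: "finite {j. T j \<noteq> None}" using I unfolding lp_inv_def by blast
  have I2: "\<And>j y. T j = Some y \<Longrightarrow> y \<in> set xs \<and> h y \<le> j \<and> (\<forall>i. h y \<le> i \<and> i < j \<longrightarrow> T i \<noteq> None)"
    using I unfolding lp_inv_def by blast
  have I3: "\<And>j j' y. T j = Some y \<Longrightarrow> T j' = Some y \<Longrightarrow> j = j'"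
    using I unfolding lp_inv_def by blast
  define f where "f = first_empty T p"
  have F: "p \<le> f \<and> T f = None \<and> (\<forall>i. p \<le> i \<and> i < f \<longrightarrow> T i \<noteq> None)"
    using fe_props[OF I1, of p] unfolding f_def by blast
  define P where "P = (\<lambda>a'. \<forall>i. a' \<le> i \<and> i < p \<longrightarrow> T i \<noteq> None)"
  define a where "a = (LEAST a'. P a')"
  have Pp: "P p" unfolding P_def by auto
  have Pa: "P a" unfolding a_def by (rule LeastI[of P p, OF Pp])
  have ap: "a \<le> p" unfolding a_def by (rule Least_le[of P, OF Pp])
  have occ: "\<And>i. a \<le> i \<Longrightarrow> i < f \<Longrightarrow> T i \<noteq> None"
  proof -
    fix i assume i: "a \<le> i" "i < f"
    show "T i \<noteq> None"
    proof (cases "i < p")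
      case True then show ?thesis using Pa i unfolding P_def by blast
    next
      case False then show ?thesis using F i by simp
    qed
  qed
  have start: "a = 0 \<or> T (a - 1) = None"
  proof (rule ccontr)
    assume "\<not> (a = 0 \<or> T (a - 1) = None)"
    hence "a > 0" "T (a - 1) \<noteq> None" by auto
    have "P (a - 1)" unfolding P_def
    proof (intro allI impI)
      fix i assume i: "a - 1 \<le> i \<and> i < p"
      show "T i \<noteq> None"
      proof (cases "i = a - 1")
        case True then show ?thesis using \<open>T (a - 1) \<noteq> None\<close> by simp
      next
        case False then have "a \<le> i" using i \<open>a > 0\<close> by linarith
        then show ?thesis using Pa i unfolding P_def by blast
      qed
    qed
    hence "a \<le> a - 1" unfolding a_def by (rule Least_le[of P])
    thus False using \<open>a > 0\<close> by simp
  qed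
  show ?thesis
  proof (intro exI[of _ a] conjI ap allI impI)
    fix s assume s: "a \<le> s \<and> s \<le> first_empty (lp_build h xs) p"
    hence sf: "s \<le> f" by (simp add: f_def T_def)
    define g where "g = (\<lambda>j. the (T j))"
    have inj: "inj_on g {a..<s}"
    proof (rule inj_onI)
      fix j j' assume "j \<in> {a..<s}" "j' \<in> {a..<s}" "g j = g j'"
      then have "T j \<noteq> None" "T j' \<noteq> None" using occ sf by auto
      then obtain y y' where y: "T j = Some y" "T j' = Some y'" by blast
      then have "y = y'" using \<open>g j = g j'\<close> unfolding g_def by simp
      then show "j = j'" using y I3 by blast
    qed
    have img: "g ` {a..<s} \<subseteq> {x\<in>set xs. a \<le> h x \<and> h x < s}"
    proof
      fix y assume "y \<in> g ` {a..<s}"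
      then obtain j where j: "j \<in> {a..<s}" "y = g j" by auto
      then have "T j \<noteq> None" using occ sf by auto
      then have Tj: "T j = Some y" using j unfolding g_def by auto
      then have y1: "y \<in> set xs \<and> h y \<le> j \<and> (\<forall>i. h y \<le> i \<and> i < j \<longrightarrow> T i \<noteq> None)"
        using I2 by blast
      have "a \<le> h y"
      proof (rule ccontr)
        assume "\<not> a \<le> h y"
        then have "a > 0" "h y \<le> a - 1" "a - 1 < j" using j by auto
        then have "T (a - 1) \<noteq> None" using y1 by blast
        then show False using start \<open>a > 0\<close> by simp
      qed
      then show "y \<in> {x\<in>set xs. a \<le> h x \<and> h x < s}" using y1 j by auto
    qed
    have "s - a = card {a..<s}" by simp
    also have "\<dots> \<le> card {x\<in>set xs. a \<le> h x \<and> h x < s}"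
      using card_inj_on_le[OF inj img] by simp
    finally show "s - a \<le> card {x\<in>set xs. a \<le> h x \<and> h x < s}" .
  qed
qed

definition Ov :: "(nat \<Rightarrow> nat) \<Rightarrow> nat list \<Rightarrow> nat \<Rightarrow> nat \<Rightarrow> nat \<Rightarrow> bool" where
  "Ov h xs q B k \<longleftrightarrow> 3 * B < 4 * card {x\<in>set xs - {q}. h x div B = k} + 4"

lemma card_minus_q: "card {x\<in>set xs. P x} \<le> card {x\<in>set xs - {q}. P x} + 1"
proof -
  have "{x\<in>set xs. P x} \<subseteq> insert q {x\<in>set xs - {q}. P x}" by auto
  then have "card {x\<in>set xs. P x} \<le> card (insert q {x\<in>set xs - {q}. P x})"
    by (intro card_mono) auto
  also have "\<dots> \<le> card {x\<in>set xs - {q}. P x} + 1" by (simp add: card_insert_le_m1)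
  finally show ?thesis .
qed

lemma cost_geom:
  assumes "distinct xs"
  shows "lp_cost h xs q \<le> length xs + 1 \<and>
    (lp_cost h xs q \<le> 4 \<or> (\<exists>l i r. l < length xs \<and> i < 9 \<and> r < 4 \<and> lp_cost h xs q \<le> 2 ^ (l + 3) \<and>
        Ov h xs q (2 ^ l) (h q div 2 ^ l - i + r)))"
proof -
  define T where "T = lp_build h xs"
  define p where "p = h q"
  define f where "f = first_empty T p"
  have I: "lp_inv h xs T" using lp_inv_build[OF assms] by (simp add: T_def)
  have I1: "finite {j. T j \<noteq> None}" using I unfolding lp_inv_def by blast
  have pf: "p \<le> f" using fe_props[OF I1, of p] unfolding f_def by blast
  obtain a where ap: "a \<le> p" and pre: "\<And>s. a \<le> s \<Longrightarrow> s \<le> f \<Longrightarrow> s - a \<le> card {x\<in>set xs. a \<le> h x \<and> h x < s}"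
    using run_lemma[OF assms, of p h] unfolding f_def T_def by blast
  have cost: "lp_cost h xs q = f - p + 1" unfolding lp_cost_def f_def T_def p_def by simp
  define L where "L = f - a"
  have Ln: "L \<le> length xs"
  proof -
    have "L \<le> card {x\<in>set xs. a \<le> h x \<and> h x < f}" using pre[of f] ap pf unfolding L_def by simp
    also have "\<dots> \<le> card (set xs)" by (intro card_mono) auto
    also have "\<dots> \<le> length xs" by (rule card_length)
    finally show ?thesis .
  qed
  have cL: "lp_cost h xs q \<le> L + 1" using cost ap pf unfolding L_def by simp
  show ?thesis
  proof (intro conjI)
    show "lp_cost h xs q \<le> length xs + 1" using cL Ln by simp
    show "lp_cost h xs q \<le> 4 \<or> (\<exists>l i r. l < length xs \<and> i < 9 \<and> r < 4 \<and> lp_cost h xs q \<le> 2 ^ (l + 3) \<and>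
        Ov h xs q (2 ^ l) (h q div 2 ^ l - i + r))"
    proof (cases "L < 4")
      case True then show ?thesis using cL by simp
    next
      case False
      have "1 \<le> L div 4" using False by simp
      then obtain l where l: "2 ^ l \<le> L div 4" "L div 4 < 2 ^ (l + 1)"
        using ex_power_ivl1[of 2 "L div 4"] by auto
      define B :: nat where "B = 2 ^ l"
      have B0: "B > 0" unfolding B_def by simp
      have B4: "4 * B \<le> L" using l(1) unfolding B_def by linarith
      have B8: "L < 8 * B" using l(2) unfolding B_def by simp
      have "(2::nat) ^ (l + 3) = 8 * B" unfolding B_def by (simp add: power_add)
      then have costB: "lp_cost h xs q \<le> 2 ^ (l + 3)" using cL B8 by linarith
      have ln: "l < length xs"
      proof -
        have "l < 2 ^ l" by (rule less_exp)
        also have "2 ^ l \<le> L" using B4 unfolding B_def by simp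
        finally show ?thesis using Ln by simp
      qed
      define k0 where "k0 = a div B"
      define s where "s = (k0 + 4) * B"
      have ad: "a = k0 * B + a mod B" unfolding k0_def by simp
      have am: "a mod B < B" using B0 by simp
      have ak: "k0 * B \<le> a" "a < (k0 + 1) * B" using ad am by (linarith, simp add: algebra_simps)
      have as: "a \<le> s" using ak unfolding s_def by (simp add: algebra_simps)
      have sf: "s \<le> f" using ak B4 unfolding s_def L_def by (simp add: algebra_simps)
      have s3: "3 * B < s - a" using ak unfolding s_def by (simp add: algebra_simps)
      have sub: "{x\<in>set xs. a \<le> h x \<and> h x < s} \<subseteq> (\<Union>r\<in>{..<4::nat}. {x\<in>set xs. h x div B = k0 + r})"
      proof
        fix x assume x: "x \<in> {x\<in>set xs. a \<le> h x \<and> h x < s}"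
        have "k0 \<le> h x div B" using x unfolding k0_def by (simp add: div_le_mono)
        moreover have "h x div B < k0 + 4" using x B0 unfolding s_def
          by (simp add: div_less_iff_less_mult)
        ultimately have "h x div B - k0 \<in> {..<4}" "h x div B = k0 + (h x div B - k0)" by auto
        then show "x \<in> (\<Union>r\<in>{..<4::nat}. {x\<in>set xs. h x div B = k0 + r})" using x by blast
      qed
      have "3 * B < card {x\<in>set xs. a \<le> h x \<and> h x < s}" using pre[OF as sf] s3 by simp
      also have "\<dots> \<le> card (\<Union>r\<in>{..<4::nat}. {x\<in>set xs. h x div B = k0 + r})"
        by (rule card_mono[OF _ sub]) auto
      also have "\<dots> \<le> (\<Sum>r<4. card {x\<in>set xs. h x div B = k0 + r})" by (rule card_UN_le) simp
      finally have sum3: "3 * B < (\<Sum>r<4. card {x\<in>set xs. h x div B = k0 + r})" .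
      have "\<exists>r<4. 3 * B < 4 * card {x\<in>set xs. h x div B = k0 + r}"
      proof (rule ccontr)
        assume "\<not> ?thesis"
        then have "\<forall>r<4. 4 * card {x\<in>set xs. h x div B = k0 + r} \<le> 3 * B" by auto
        then have "(\<Sum>r<4. 4 * card {x\<in>set xs. h x div B = k0 + r}) \<le> (\<Sum>r<(4::nat). 3 * B)"
          by (intro sum_mono) auto
        then have "4 * (\<Sum>r<4. card {x\<in>set xs. h x div B = k0 + r}) \<le> 4 * (3 * B)"
          by (simp add: sum_distrib_left)
        then show False using sum3 by simp
      qed
      then obtain r where r: "r < 4" "3 * B < 4 * card {x\<in>set xs. h x div B = k0 + r}" by blast
      have ov: "Ov h xs q B (k0 + r)"
        using r(2) card_minus_q[of xs "\<lambda>x. h x div B = k0 + r" q] unfolding Ov_def by linarith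
      define i where "i = p div B - k0"
      have pk: "k0 \<le> p div B" using ap unfolding k0_def by (simp add: div_le_mono)
      have "p < a + 8 * B" using pf B8 ap unfolding L_def by linarith
      then have "p div B < k0 + 9" using ak B0 by (simp add: div_less_iff_less_mult algebra_simps)
      then have i9: "i < 9" using pk unfolding i_def by simp
      have "p div B - i = k0" using pk unfolding i_def by simp
      then show ?thesis using ov ln i9 r(1) costB unfolding B_def p_def by blast
    qed
  qed
qed

lemma prob_split:
  fixes H :: "(nat \<Rightarrow> nat) pmf"
  assumes "\<And>h. h \<in> set_pmf H \<Longrightarrow> h z < t"
  shows "measure_pmf.prob H E = (\<Sum>y<t. measure_pmf.prob H (E \<inter> {h. h z = y}))"
proof -
  have "measure_pmf.prob H E = measure_pmf.prob H (\<Union>y\<in>{..<t}. E \<inter> {h. h z = y})"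
  proof (rule measure_prob_cong_0)
    fix h assume h: "h \<in> E - (\<Union>y\<in>{..<t}. E \<inter> {h. h z = y})"
    show "pmf H h = 0"
    proof (rule ccontr)
      assume "pmf H h \<noteq> 0"
      then have "h \<in> set_pmf H" by (simp add: set_pmf_iff)
      then have "h z < t" by (rule assms)
      then show False using h by auto
    qed
  next
    fix h assume "h \<in> (\<Union>y\<in>{..<t}. E \<inter> {h. h z = y}) - E"
    then show "pmf H h = 0" by auto
  qed
  also have "\<dots> = (\<Sum>y<t. measure_pmf.prob H (E \<inter> {h. h z = y}))"
    by (rule measure_pmf.finite_measure_finite_Union) (auto simp: disjoint_family_on_def)
  finally show ?thesis .
qed

lemma marg:
  assumes ind: "k_independent 5 u t H" and supp: "\<forall>h\<in>set_pmf H. \<forall>x<u. h x < t"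
    and u5: "5 \<le> u" and t0: "t > 0"
  shows "A \<subseteq> {..<u} \<Longrightarrow> card A + m = 5 \<Longrightarrow> (\<forall>x\<in>A. g x < t) \<Longrightarrow>
     measure_pmf.prob H {h. \<forall>x\<in>A. h x = g x} = 1 / real t ^ card A"
proof (induction m arbitrary: A g)
  case 0
  have finA: "finite A" using 0 finite_subset by blast
  define xs where "xs = sorted_list_of_set A"
  define ys where "ys = map g xs"
  have xs: "length xs = 5" "distinct xs" "set xs = A"
    using 0 finA by (auto simp: xs_def)
  have ys: "length ys = 5" "set ys \<subseteq> {..<t}" using xs 0 by (auto simp: ys_def)
  have "measure_pmf.prob H {h. \<forall>i<5. h (xs ! i) = ys ! i} = 1 / real t ^ 5"
    using ind xs ys 0 unfolding k_independent_def by auto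
  moreover have "{h. \<forall>i<5. h (xs ! i) = ys ! i} = {h. \<forall>x\<in>A. h x = g x}"
  proof -
    have "\<And>h. (\<forall>i<5. h (xs ! i) = ys ! i) \<longleftrightarrow> (\<forall>x\<in>set xs. h x = g x)"
      using xs(1) by (simp add: ys_def all_set_conv_all_nth)
    then show ?thesis using xs(3) by auto
  qed
  ultimately show ?case using 0 by simp
next
  case (Suc m)
  have finA: "finite A" using Suc.prems finite_subset by blast
  have "card A < card {..<u}" using Suc.prems u5 by simp
  then have "\<not> {..<u} \<subseteq> A" using finA by (meson card_mono not_le)
  then obtain z where z: "z < u" "z \<notin> A" by auto
  have "measure_pmf.prob H {h. \<forall>x\<in>A. h x = g x} =
      (\<Sum>y<t. measure_pmf.prob H ({h. \<forall>x\<in>A. h x = g x} \<inter> {h. h z = y}))"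
    by (rule prob_split) (use supp z in auto)
  also have "\<dots> = (\<Sum>y<t. 1 / real t ^ Suc (card A))"
  proof (rule sum.cong[OF refl])
    fix y assume y: "y \<in> {..<t}"
    have "{h. \<forall>x\<in>A. h x = g x} \<inter> {h. h z = y} = {h. \<forall>x\<in>insert z A. h x = (g(z := y)) x}"
      using z by auto
    moreover have "measure_pmf.prob H {h. \<forall>x\<in>insert z A. h x = (g(z := y)) x} = 1 / real t ^ card (insert z A)"
      by (rule Suc.IH) (use Suc.prems z y finA in auto)
    ultimately show "measure_pmf.prob H ({h. \<forall>x\<in>A. h x = g x} \<inter> {h. h z = y}) = 1 / real t ^ Suc (card A)"
      using z finA by simp
  qed
  also have "\<dots> = 1 / real t ^ card A" using t0 by (simp add: field_simps)
  finally show ?case .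
qed

lemma restr_eq:
  assumes ind: "k_independent 5 u t H" and supp: "\<forall>h\<in>set_pmf H. \<forall>x<u. h x < t"
    and u5: "5 \<le> u" and t0: "t > 0" and A: "A \<subseteq> {..<u}" "card A \<le> 5"
  shows "map_pmf (\<lambda>h x. if x \<in> A then h x else 0) H = Pi_pmf A 0 (\<lambda>_. pmf_of_set {..<t})"
proof (rule pmf_eqI)
  fix g :: "nat \<Rightarrow> nat"
  have finA: "finite A" using A finite_subset by blast
  define r where "r = (\<lambda>(h::nat\<Rightarrow>nat) x. if x \<in> A then h x else 0)"
  have L: "pmf (map_pmf r H) g = measure_pmf.prob H (r -` {g})" by (simp add: pmf_map)
  show "pmf (map_pmf (\<lambda>h x. if x \<in> A then h x else 0) H) g = pmf (Pi_pmf A 0 (\<lambda>_. pmf_of_set {..<t})) g"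
  proof (cases "\<forall>x. x \<notin> A \<longrightarrow> g x = 0")
    case False
    then have "r -` {g} = {}" unfolding r_def by (auto simp: fun_eq_iff)
    then show ?thesis using L False finA by (auto simp: pmf_Pi r_def)
  next
    case True
    show ?thesis
    proof (cases "\<forall>x\<in>A. g x < t")
      case False
      then obtain x where x: "x \<in> A" "\<not> g x < t" by auto
      have "r -` {g} \<inter> set_pmf H = {}"
      proof (rule ccontr)
        assume "r -` {g} \<inter> set_pmf H \<noteq> {}"
        then obtain h where h: "r h = g" "h \<in> set_pmf H" by auto
        have "r h x = g x" using h(1) by simp
        then have "h x = g x" using x unfolding r_def by simp
        moreover have "h x < t" using supp h x A by auto
        ultimately show False using x by simp
      qed
      then have "measure_pmf.prob H (r -` {g}) = 0" by (metis measure_Int_set_pmf measure_empty)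
      moreover have "(\<Prod>x\<in>A. pmf (pmf_of_set {..<t}) (g x)) = 0"
      proof (rule prod_zero[OF finA])
        have "pmf (pmf_of_set {..<t}) (g x) = 0" using x t0 by (subst pmf_of_set) auto
        then show "\<exists>a\<in>A. pmf (pmf_of_set {..<t}) (g a) = 0" using x by blast
      qed
      ultimately show ?thesis using L True finA by (simp add: pmf_Pi r_def)
    next
      case False2: True
      have "r -` {g} = {h. \<forall>x\<in>A. h x = g x}"
        using True unfolding r_def by (auto simp: fun_eq_iff)
      moreover have "measure_pmf.prob H {h. \<forall>x\<in>A. h x = g x} = 1 / real t ^ card A"
        by (rule marg[OF ind supp u5 t0, of A "5 - card A"]) (use A False2 in auto)
      moreover have "(\<Prod>x\<in>A. pmf (pmf_of_set {..<t}) (g x)) = 1 / real t ^ card A"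
      proof -
        have "(\<Prod>x\<in>A. pmf (pmf_of_set {..<t}) (g x)) = (\<Prod>x\<in>A. 1 / real t)"
        proof (rule prod.cong[OF refl])
          fix x assume "x \<in> A"
          then show "pmf (pmf_of_set {..<t}) (g x) = 1 / real t" using False2 t0 by (subst pmf_of_set) auto
        qed
        then show ?thesis by (simp add: power_one_over)
      qed
      ultimately show ?thesis using L True finA by (simp add: pmf_Pi r_def)
    qed
  qed
qed

lemma transfer:
  fixes W :: "(nat \<Rightarrow> nat) \<Rightarrow> real"
  assumes ind: "k_independent 5 u t H" and supp: "\<forall>h\<in>set_pmf H. \<forall>x<u. h x < t"
    and u5: "5 \<le> u" and t0: "t > 0"
    and K: "finite K" "K \<subseteq> {..<u}" and A: "A \<subseteq> K" "card A \<le> 5"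
    and W: "\<And>h. W h = W (\<lambda>x. if x \<in> A then h x else 0)"
  shows "measure_pmf.expectation H W = measure_pmf.expectation (Pi_pmf K 0 (\<lambda>_. pmf_of_set {..<t})) W"
proof -
  define r where "r = (\<lambda>(h::nat\<Rightarrow>nat) x. if x \<in> A then h x else 0)"
  have "measure_pmf.expectation H W = measure_pmf.expectation H (\<lambda>h. W (r h))"
    using W unfolding r_def by simp
  also have "\<dots> = measure_pmf.expectation (map_pmf r H) W" by (rule integral_map_pmf[symmetric])
  also have "map_pmf r H = Pi_pmf A 0 (\<lambda>_. pmf_of_set {..<t})"
    unfolding r_def by (rule restr_eq[OF ind supp u5 t0]) (use A K in auto)
  also have "\<dots> = map_pmf r (Pi_pmf K 0 (\<lambda>_. pmf_of_set {..<t}))"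
    unfolding r_def by (rule Pi_pmf_subset) (use A K in auto)
  also have "measure_pmf.expectation \<dots> W = measure_pmf.expectation (Pi_pmf K 0 (\<lambda>_. pmf_of_set {..<t})) (\<lambda>h. W (r h))"
    by (rule integral_map_pmf)
  also have "\<dots> = measure_pmf.expectation (Pi_pmf K 0 (\<lambda>_. pmf_of_set {..<t})) W"
    using W unfolding r_def by simp
  finally show ?thesis .
qed

lemma fin_Pi: "finite S \<Longrightarrow> finite (set_pmf U) \<Longrightarrow> finite (set_pmf (Pi_pmf S d (\<lambda>_. U)))"
  by (simp add: set_Pi_pmf) (rule finite_PiE_dflt, auto)

lemma pair_prod:
  fixes a :: "'a \<Rightarrow> real" and b :: "'b \<Rightarrow> real"
  assumes fA: "finite (set_pmf A)" and fB: "finite (set_pmf B)"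
  shows "measure_pmf.expectation (pair_pmf A B) (\<lambda>w. a (fst w) * b (snd w)) =
         measure_pmf.expectation A a * measure_pmf.expectation B b"
proof -
  have 1: "measure_pmf.expectation (pair_pmf A B) (\<lambda>w. a (fst w) * b (snd w)) =
      (\<Sum>w\<in>set_pmf A \<times> set_pmf B. a (fst w) * b (snd w) * pmf (pair_pmf A B) w)"
    by (rule integral_measure_pmf_real) (use fA fB in auto)
  have 2: "measure_pmf.expectation A a = (\<Sum>x\<in>set_pmf A. a x * pmf A x)"
    by (rule integral_measure_pmf_real) (use fA in auto)
  have 3: "measure_pmf.expectation B b = (\<Sum>x\<in>set_pmf B. b x * pmf B x)"
    by (rule integral_measure_pmf_real) (use fB in auto)
  have "(\<Sum>w\<in>set_pmf A \<times> set_pmf B. a (fst w) * b (snd w) * pmf (pair_pmf A B) w)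
      = (\<Sum>x\<in>set_pmf A. \<Sum>y\<in>set_pmf B. (a x * pmf A x) * (b y * pmf B y))"
    unfolding sum.cartesian_product by (rule sum.cong) (auto simp: pmf_pair mult_ac)
  also have "\<dots> = (\<Sum>x\<in>set_pmf A. a x * pmf A x) * (\<Sum>x\<in>set_pmf B. b x * pmf B x)"
    by (simp add: sum_product)
  finally show ?thesis using 1 2 3 by simp
qed

lemma arith4:
  fixes z y c n p :: real
  assumes "z \<le> n * p + 3 * n ^ 2 * p ^ 2" "y \<le> p" "c \<le> p * (n * p)" "0 \<le> p"
  shows "z + y + 6 * c \<le> (n + 1) * p + 3 * (n + 1) ^ 2 * p ^ 2"
proof -
  have "(n + 1) * p + 3 * (n + 1) ^ 2 * p ^ 2 = (n * p + 3 * n ^ 2 * p ^ 2) + p + 6 * (p * (n * p)) + 3 * p ^ 2"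
    by (simp add: algebra_simps power2_eq_square)
  moreover have "0 \<le> p ^ 2" by simp
  ultimately show ?thesis using assms by linarith
qed

lemma mom:
  fixes U :: "nat pmf" and Y :: "nat \<Rightarrow> real" and p :: real
  assumes fU: "finite (set_pmf U)"
    and EY: "measure_pmf.expectation U Y = 0"
    and EY2: "measure_pmf.expectation U (\<lambda>y. Y y ^ 2) \<le> p"
    and EY4: "measure_pmf.expectation U (\<lambda>y. Y y ^ 4) \<le> p"
    and p0: "0 \<le> p"
  shows "finite S \<Longrightarrow>
    measure_pmf.expectation (Pi_pmf S 0 (\<lambda>_. U)) (\<lambda>f. \<Sum>x\<in>S. Y (f x)) = 0 \<and>
    measure_pmf.expectation (Pi_pmf S 0 (\<lambda>_. U)) (\<lambda>f. (\<Sum>x\<in>S. Y (f x)) ^ 2) \<le> card S * p \<and>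
    measure_pmf.expectation (Pi_pmf S 0 (\<lambda>_. U)) (\<lambda>f. (\<Sum>x\<in>S. Y (f x)) ^ 4) \<le> card S * p + 3 * real (card S) ^ 2 * p ^ 2"
proof (induction S rule: finite_induct)
  case empty
  then show ?case by simp
next
  case (insert x S)
  define M where "M = Pi_pmf S 0 (\<lambda>_. U)"
  define Z where "Z = (\<lambda>f. \<Sum>x\<in>S. Y (f x))"
  define P where "P = pair_pmf U M"
  have fM: "finite (set_pmf M)" unfolding M_def by (rule fin_Pi[OF insert(1) fU])
  have fP: "finite (set_pmf P)" unfolding P_def using fU fM by simp
  have IH: "measure_pmf.expectation M Z = 0" "measure_pmf.expectation M (\<lambda>f. Z f ^ 2) \<le> card S * p"
    "measure_pmf.expectation M (\<lambda>f. Z f ^ 4) \<le> card S * p + 3 * real (card S) ^ 2 * p ^ 2"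
    using insert.IH unfolding M_def Z_def by auto
  have eqPi: "Pi_pmf (insert x S) 0 (\<lambda>_. U) = map_pmf (\<lambda>(y,f). f(x:=y)) P"
    unfolding P_def M_def by (rule Pi_pmf_insert[OF insert(1,2)])
  have sumeq: "\<And>y f. (\<Sum>x'\<in>insert x S. Y ((f(x:=y)) x')) = Y y + Z f"
  proof -
    fix y f
    have "(\<Sum>x'\<in>insert x S. Y ((f(x:=y)) x')) = Y y + (\<Sum>x'\<in>S. Y ((f(x:=y)) x'))"
      using insert(1,2) by simp
    also have "(\<Sum>x'\<in>S. Y ((f(x:=y)) x')) = Z f"
      unfolding Z_def using insert(2) by (intro sum.cong) auto
    finally show "(\<Sum>x'\<in>insert x S. Y ((f(x:=y)) x')) = Y y + Z f" .
  qed
  have E: "\<And>j. measure_pmf.expectation (Pi_pmf (insert x S) 0 (\<lambda>_. U)) (\<lambda>f. (\<Sum>x\<in>insert x S. Y (f x)) ^ j)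
      = measure_pmf.expectation P (\<lambda>w. (Y (fst w) + Z (snd w)) ^ j)"
    unfolding eqPi integral_map_pmf
  proof (intro Bochner_Integration.integral_cong refl)
    fix j and w :: "nat \<times> ('a \<Rightarrow> nat)"
    obtain y f where w: "w = (y, f)" by (cases w)
    show "(\<Sum>x'\<in>insert x S. Y (((\<lambda>(y, f). f(x := y)) w) x')) ^ j = (Y (fst w) + Z (snd w)) ^ j"
      using sumeq[where y=y and f=f] by (simp del: fun_upd_apply add: w)
  qed
  have E1: "measure_pmf.expectation (Pi_pmf (insert x S) 0 (\<lambda>_. U)) (\<lambda>f. \<Sum>x\<in>insert x S. Y (f x))
      = measure_pmf.expectation P (\<lambda>w. Y (fst w) + Z (snd w))"
    using E[of 1] by simp
  have int: "\<And>g :: nat \<times> ('a \<Rightarrow> nat) \<Rightarrow> real. integrable (measure_pmf P) g" by (rule integrable_measure_pmf_finite[OF fP])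
  have PP: "\<And>(a :: nat \<Rightarrow> real) (b :: ('a \<Rightarrow> nat) \<Rightarrow> real). measure_pmf.expectation P (\<lambda>w. a (fst w) * b (snd w)) =
       measure_pmf.expectation U a * measure_pmf.expectation M b"
    unfolding P_def by (rule pair_prod[OF fU fM])
  have P1: "\<And>a :: nat \<Rightarrow> real. measure_pmf.expectation P (\<lambda>w. a (fst w)) = measure_pmf.expectation U a"
    using PP[of _ "\<lambda>_. 1"] by simp
  have P2: "\<And>b :: ('a \<Rightarrow> nat) \<Rightarrow> real. measure_pmf.expectation P (\<lambda>w. b (snd w)) = measure_pmf.expectation M b"
    using PP[of "\<lambda>_. 1"] by simp
  have EY2n: "measure_pmf.expectation U (\<lambda>y. Y y ^ 2) \<ge> 0" by simp
  have EZ2n: "measure_pmf.expectation M (\<lambda>f. Z f ^ 2) \<ge> 0" by simp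
  have m1: "measure_pmf.expectation P (\<lambda>w. Y (fst w) + Z (snd w)) = 0"
    using int P1 P2 EY IH(1) by simp
  have m2: "measure_pmf.expectation P (\<lambda>w. (Y (fst w) + Z (snd w))^2) =
     measure_pmf.expectation U (\<lambda>y. Y y ^ 2) + 2 * (measure_pmf.expectation U Y * measure_pmf.expectation M Z)
     + measure_pmf.expectation M (\<lambda>f. Z f ^ 2)"
  proof -
    have "(\<lambda>w. (Y (fst w) + Z (snd w))^2) = (\<lambda>w. (\<lambda>y. Y y ^ 2) (fst w) + 2 * (Y (fst w) * Z (snd w)) + (\<lambda>f. Z f ^ 2) (snd w))"
      by (simp add: power2_eq_square algebra_simps)
    then show ?thesis using int by (simp add: PP[of Y Z] P1[of "\<lambda>y. Y y ^ 2"] P2[of "\<lambda>f. Z f ^ 2"])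
  qed
  have m4: "measure_pmf.expectation P (\<lambda>w. (Y (fst w) + Z (snd w))^4) =
     measure_pmf.expectation U (\<lambda>y. Y y ^ 4)
     + 4 * (measure_pmf.expectation U (\<lambda>y. Y y ^ 3) * measure_pmf.expectation M Z)
     + 6 * (measure_pmf.expectation U (\<lambda>y. Y y ^ 2) * measure_pmf.expectation M (\<lambda>f. Z f ^ 2))
     + 4 * (measure_pmf.expectation U Y * measure_pmf.expectation M (\<lambda>f. Z f ^ 3))
     + measure_pmf.expectation M (\<lambda>f. Z f ^ 4)"
  proof -
    have "(\<lambda>w. (Y (fst w) + Z (snd w))^4) = (\<lambda>w. (\<lambda>y. Y y ^ 4) (fst w)
       + 4 * ((\<lambda>y. Y y ^ 3) (fst w) * Z (snd w))
       + 6 * ((\<lambda>y. Y y ^ 2) (fst w) * (\<lambda>f. Z f ^ 2) (snd w))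
       + 4 * (Y (fst w) * (\<lambda>f. Z f ^ 3) (snd w))
       + (\<lambda>f. Z f ^ 4) (snd w))"
      by (simp add: power2_eq_square power3_eq_cube power4_eq_xxxx algebra_simps)
    then show ?thesis using int by (simp add: PP[of "\<lambda>y. Y y ^ 3" Z] PP[of "\<lambda>y. Y y ^ 2" "\<lambda>f. Z f ^ 2"] PP[of Y "\<lambda>f. Z f ^ 3"] P1[of "\<lambda>y. Y y ^ 4"] P2[of "\<lambda>f. Z f ^ 4"])
  qed
  have b6: "measure_pmf.expectation U (\<lambda>y. Y y ^ 2) * measure_pmf.expectation M (\<lambda>f. Z f ^ 2) \<le> p * (card S * p)"
    by (rule mult_mono[OF EY2 IH(2) p0 EZ2n])
  have cS: "card (insert x S) = Suc (card S)" using insert(1,2) by simp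
  show ?case
  proof (intro conjI)
    show "measure_pmf.expectation (Pi_pmf (insert x S) 0 (\<lambda>_. U)) (\<lambda>f. \<Sum>x\<in>insert x S. Y (f x)) = 0"
      using E1 m1 by simp
    show "measure_pmf.expectation (Pi_pmf (insert x S) 0 (\<lambda>_. U)) (\<lambda>f. (\<Sum>x\<in>insert x S. Y (f x)) ^ 2) \<le> card (insert x S) * p"
      using E[of 2] m2 EY IH(2) EY2 cS by (simp add: algebra_simps)
    have "measure_pmf.expectation (Pi_pmf (insert x S) 0 (\<lambda>_. U)) (\<lambda>f. (\<Sum>x\<in>insert x S. Y (f x)) ^ 4)
       = measure_pmf.expectation M (\<lambda>f. Z f ^ 4) + measure_pmf.expectation U (\<lambda>y. Y y ^ 4) +
         6 * (measure_pmf.expectation U (\<lambda>y. Y y ^ 2) * measure_pmf.expectation M (\<lambda>f. Z f ^ 2))"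
      using E[of 4] m4 EY IH(1) by simp
    also have "\<dots> \<le> (real (card S) + 1) * p + 3 * (real (card S) + 1) ^ 2 * p ^ 2"
      by (rule arith4[OF IH(3) EY4 b6 p0])
    finally show "measure_pmf.expectation (Pi_pmf (insert x S) 0 (\<lambda>_. U)) (\<lambda>f. (\<Sum>x\<in>insert x S. Y (f x)) ^ 4)
        \<le> card (insert x S) * p + 3 * real (card (insert x S)) ^ 2 * p ^ 2"
      using cS by (simp add: add.commute)
  qed
qed

lemma sum4: "(\<Sum>x\<in>S. a x) ^ 4 = (\<Sum>x4\<in>S. \<Sum>x3\<in>S. \<Sum>x2\<in>S. \<Sum>x1\<in>S. a x1 * a x2 * a x3 * (a x4 :: real))"
  by (simp only: power4_eq_xxxx sum_distrib_left sum_distrib_right)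

lemma unif_facts:
  fixes t B k :: nat
  assumes t0: "t > 0" and B0: "B > 0"
  defines "p \<equiv> real (card {y\<in>{..<t}. y div B = k}) / real t"
  defines "Y \<equiv> (\<lambda>y::nat. (if y div B = k then 1 else 0) - p)"
  shows "measure_pmf.expectation (pmf_of_set {..<t}) Y = 0"
    "measure_pmf.expectation (pmf_of_set {..<t}) (\<lambda>y. Y y ^ 2) \<le> p"
    "measure_pmf.expectation (pmf_of_set {..<t}) (\<lambda>y. Y y ^ 4) \<le> p"
    "0 \<le> p" "p \<le> real B / real t"
proof -
  define U where "U = pmf_of_set {..<t::nat}"
  have fU: "finite (set_pmf U)" unfolding U_def using t0 by (subst set_pmf_of_set) auto
  have int: "\<And>f :: nat \<Rightarrow> real. integrable (measure_pmf U) f" by (rule integrable_measure_pmf_finite[OF fU])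
  define ind where "ind = (\<lambda>y::nat. if y div B = k then 1 else (0::real))"
  have Eind: "measure_pmf.expectation U ind = p"
  proof -
    have "measure_pmf.expectation U ind = (\<Sum>y<t. ind y) / real t"
      unfolding U_def using t0 by (subst integral_pmf_of_set) auto
    also have "(\<Sum>y<t. ind y) = real (card {y\<in>{..<t}. y div B = k})"
      unfolding ind_def by (simp add: sum.If_cases Int_def)
    finally show ?thesis unfolding p_def .
  qed
  show p0: "0 \<le> p" unfolding p_def by simp
  have "card {y\<in>{..<t}. y div B = k} \<le> card {..<t}" by (intro card_mono) auto
  then have p1: "p \<le> 1" unfolding p_def using t0 by (simp add: divide_le_eq_1)
  have "{y\<in>{..<t}. y div B = k} \<subseteq> {k * B..<k * B + B}"
  proof
    fix y assume "y \<in> {y\<in>{..<t}. y div B = k}"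
    then have "y div B = k" by simp
    then have e: "y = k * B + y mod B" by (metis div_mult_mod_eq)
    have "y mod B < B" using B0 by simp
    then have "k * B \<le> y \<and> y < k * B + B" using e by linarith
    then show "y \<in> {k * B..<k * B + B}" by simp
  qed
  then have "card {y\<in>{..<t}. y div B = k} \<le> card {k * B..<k * B + B}" by (intro card_mono) auto
  then show "p \<le> real B / real t" unfolding p_def using t0 by (simp add: divide_right_mono)
  have YE: "Y = (\<lambda>y. ind y - p)" unfolding Y_def ind_def by simp
  show E1: "measure_pmf.expectation (pmf_of_set {..<t}) Y = 0"
    unfolding U_def[symmetric] YE using int Eind by simp
  have Y2: "\<And>y. Y y ^ 2 = ind y * (1 - 2 * p) + p ^ 2"
    unfolding YE ind_def by (simp add: power2_eq_square algebra_simps)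
  have E2: "measure_pmf.expectation U (\<lambda>y. Y y ^ 2) = p * (1 - 2 * p) + p ^ 2"
    unfolding Y2 using int Eind by simp
  show "measure_pmf.expectation (pmf_of_set {..<t}) (\<lambda>y. Y y ^ 2) \<le> p"
    unfolding U_def[symmetric] E2 by (simp add: power2_eq_square algebra_simps)
  have Y4: "\<And>y. Y y ^ 4 \<le> Y y ^ 2"
  proof -
    fix y
    have "\<bar>Y y\<bar> \<le> 1" unfolding YE ind_def using p0 p1 by auto
    then have "Y y ^ 2 \<le> 1" by (simp add: abs_square_le_1)
    then have "Y y ^ 2 * Y y ^ 2 \<le> 1 * Y y ^ 2" by (intro mult_right_mono) auto
    then show "Y y ^ 4 \<le> Y y ^ 2" by (simp add: power4_eq_xxxx power2_eq_square mult.assoc)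
  qed
  have "measure_pmf.expectation U (\<lambda>y. Y y ^ 4) \<le> measure_pmf.expectation U (\<lambda>y. Y y ^ 2)"
    by (intro integral_mono int Y4)
  also have "\<dots> \<le> p" unfolding E2 by (simp add: power2_eq_square algebra_simps)
  finally show "measure_pmf.expectation (pmf_of_set {..<t}) (\<lambda>y. Y y ^ 4) \<le> p" unfolding U_def .
qed

lemma condmom:
  fixes U :: "nat pmf" and Y :: "nat \<Rightarrow> real" and p :: real and t :: nat and S :: "nat set"
  assumes fU: "finite (set_pmf U)"
    and EY: "measure_pmf.expectation U Y = 0"
    and EY2: "measure_pmf.expectation U (\<lambda>y. Y y ^ 2) \<le> p"
    and EY4: "measure_pmf.expectation U (\<lambda>y. Y y ^ 4) \<le> p"
    and p0: "0 \<le> p"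
    and Uv: "measure_pmf.expectation U (\<lambda>y. if y = v then 1 else 0) \<le> 1 / real t"
    and S: "finite S" "q \<notin> S"
  shows "measure_pmf.expectation (Pi_pmf (insert q S) 0 (\<lambda>_. U))
      (\<lambda>f. (if f q = v then 1 else 0) * (\<Sum>x\<in>S. Y (f x)) ^ 4) \<le> (1 / real t) * (card S * p + 3 * real (card S) ^ 2 * p ^ 2)"
proof -
  define M where "M = Pi_pmf S 0 (\<lambda>_. U)"
  define Z where "Z = (\<lambda>f. \<Sum>x\<in>S. Y (f x))"
  have fM: "finite (set_pmf M)" unfolding M_def by (rule fin_Pi[OF S(1) fU])
  have eqPi: "Pi_pmf (insert q S) 0 (\<lambda>_. U) = map_pmf (\<lambda>(y,f). f(q:=y)) (pair_pmf U M)"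
    unfolding M_def by (rule Pi_pmf_insert[OF S])
  have "measure_pmf.expectation (Pi_pmf (insert q S) 0 (\<lambda>_. U))
      (\<lambda>f. (if f q = v then 1 else 0) * (\<Sum>x\<in>S. Y (f x)) ^ 4) =
      measure_pmf.expectation (pair_pmf U M) (\<lambda>w. (\<lambda>y. if y = v then 1 else 0) (fst w) * (\<lambda>f. Z f ^ 4) (snd w))"
    unfolding eqPi integral_map_pmf
  proof (intro Bochner_Integration.integral_cong refl)
    fix w :: "nat \<times> (nat \<Rightarrow> nat)"
    obtain y f where w: "w = (y, f)" by (cases w)
    have "(\<Sum>x\<in>S. Y ((f(q := y)) x)) = Z f" unfolding Z_def using S(2) by (intro sum.cong) auto
    then show "(\<lambda>f. (if f q = v then 1 else 0) * (\<Sum>x\<in>S. Y (f x)) ^ 4) ((\<lambda>(y, f). f(q := y)) w) =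
      (\<lambda>y. if y = v then 1 else 0) (fst w) * (\<lambda>f. Z f ^ 4) (snd w)"
      by (simp add: w)
  qed
  also have "\<dots> = measure_pmf.expectation U (\<lambda>y. if y = v then 1 else 0) * measure_pmf.expectation M (\<lambda>f. Z f ^ 4)"
    by (rule pair_prod[OF fU fM])
  also have "\<dots> \<le> (1 / real t) * (card S * p + 3 * real (card S) ^ 2 * p ^ 2)"
  proof (rule mult_mono[OF Uv])
    show "measure_pmf.expectation M (\<lambda>f. Z f ^ 4) \<le> card S * p + 3 * real (card S) ^ 2 * p ^ 2"
      using mom[OF fU EY EY2 EY4 p0 S(1)] unfolding M_def Z_def by blast
    show "0 \<le> 1 / real t" by simp
    show "0 \<le> measure_pmf.expectation M (\<lambda>f. Z f ^ 4)" by (simp add: zero_le_even_power)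
  qed
  finally show ?thesis .
qed

lemma E_sum4:
  fixes F :: "nat \<Rightarrow> nat \<Rightarrow> nat \<Rightarrow> nat \<Rightarrow> 'a \<Rightarrow> real"
  assumes "finite (set_pmf M)"
  shows "measure_pmf.expectation M (\<lambda>h. \<Sum>x4\<in>S. \<Sum>x3\<in>S. \<Sum>x2\<in>S. \<Sum>x1\<in>S. F x4 x3 x2 x1 h) =
    (\<Sum>x4\<in>S. \<Sum>x3\<in>S. \<Sum>x2\<in>S. \<Sum>x1\<in>S. measure_pmf.expectation M (F x4 x3 x2 x1))"
  using assms by (simp add: integral_sum integrable_measure_pmf_finite)

lemma card5: "card {a, b, c, d, e::nat} \<le> 5"
proof -
  have "{a, b, c, d, e} = set [a, b, c, d, e]" by simp
  then show ?thesis using card_length[of "[a, b, c, d, e]"] by simp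
qed

lemma Htransfer:
  fixes Y :: "nat \<Rightarrow> real" and S :: "nat set"
  assumes ind: "k_independent 5 u t H" and supp: "\<forall>h\<in>set_pmf H. \<forall>x<u. h x < t"
    and u5: "5 \<le> u" and t0: "t > 0"
    and S: "finite S" "S \<subseteq> {..<u}" "q < u"
  shows "measure_pmf.expectation H (\<lambda>h. (if h q = v then 1 else 0) * (\<Sum>x\<in>S. Y (h x)) ^ 4) =
    measure_pmf.expectation (Pi_pmf (insert q S) 0 (\<lambda>_. pmf_of_set {..<t}))
      (\<lambda>h. (if h q = v then 1 else 0) * (\<Sum>x\<in>S. Y (h x)) ^ 4)"
proof -
  define K where "K = insert q S"
  define PK where "PK = Pi_pmf K 0 (\<lambda>_. pmf_of_set {..<t})"
  define r where "r = (\<lambda>(h::nat\<Rightarrow>nat) x. if x \<in> K then h x else 0)"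
  define H' where "H' = map_pmf r H"
  define tm where "tm = (\<lambda>x4 x3 x2 x1 (h::nat\<Rightarrow>nat). (if h q = v then 1 else 0) * (Y (h x1) * Y (h x2) * Y (h x3) * Y (h x4)))"
  have finK: "finite K" "K \<subseteq> {..<u}" unfolding K_def using S by auto
  have fU: "finite (set_pmf (pmf_of_set {..<t}))" using t0 by (subst set_pmf_of_set) auto
  have fPK: "finite (set_pmf PK)" unfolding PK_def by (rule fin_Pi[OF finK(1) fU])
  have fH': "finite (set_pmf H')"
  proof -
    have "set_pmf H' \<subseteq> PiE_dflt K 0 (\<lambda>_. {..<t})"
    proof
      fix g assume "g \<in> set_pmf H'"
      then obtain h where h: "h \<in> set_pmf H" "g = r h" unfolding H'_def by auto
      then show "g \<in> PiE_dflt K 0 (\<lambda>_. {..<t})"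
        using supp finK(2) unfolding PiE_dflt_def r_def by auto
    qed
    moreover have "finite (PiE_dflt K 0 (\<lambda>_. {..<t}))" using finK(1) by (intro finite_PiE_dflt) auto
    ultimately show ?thesis by (rule finite_subset)
  qed
  have W: "\<And>h. (if h q = v then 1 else 0) * (\<Sum>x\<in>S. Y (h x)) ^ 4 =
      (\<Sum>x4\<in>S. \<Sum>x3\<in>S. \<Sum>x2\<in>S. \<Sum>x1\<in>S. tm x4 x3 x2 x1 h)"
    unfolding tm_def sum4 by (simp add: sum_distrib_left)
  have rH: "\<And>G :: (nat \<Rightarrow> nat) \<Rightarrow> real. (\<And>h. G (r h) = G h) \<Longrightarrow> measure_pmf.expectation H G = measure_pmf.expectation H' G"
    unfolding H'_def by simp
  have tmr: "\<And>x4 x3 x2 x1 h. x4 \<in> S \<Longrightarrow> x3 \<in> S \<Longrightarrow> x2 \<in> S \<Longrightarrow> x1 \<in> S \<Longrightarrow> tm x4 x3 x2 x1 (r h) = tm x4 x3 x2 x1 h"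
    unfolding tm_def r_def K_def by simp
  have tmH: "\<And>x4 x3 x2 x1. x4 \<in> S \<Longrightarrow> x3 \<in> S \<Longrightarrow> x2 \<in> S \<Longrightarrow> x1 \<in> S \<Longrightarrow>
      measure_pmf.expectation H (tm x4 x3 x2 x1) = measure_pmf.expectation PK (tm x4 x3 x2 x1)"
  proof -
    fix x4 x3 x2 x1 assume x: "x4 \<in> S" "x3 \<in> S" "x2 \<in> S" "x1 \<in> S"
    show "measure_pmf.expectation H (tm x4 x3 x2 x1) = measure_pmf.expectation PK (tm x4 x3 x2 x1)"
      unfolding PK_def
    proof (rule transfer[OF ind supp u5 t0 finK, of "{q, x1, x2, x3, x4}"])
      show "{q, x1, x2, x3, x4} \<subseteq> K" using x unfolding K_def by auto
      show "card {q, x1, x2, x3, x4} \<le> 5" by (rule card5)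
      fix h show "tm x4 x3 x2 x1 h = tm x4 x3 x2 x1 (\<lambda>x. if x \<in> {q, x1, x2, x3, x4} then h x else 0)"
        unfolding tm_def by simp
    qed
  qed
  have "measure_pmf.expectation H (\<lambda>h. (if h q = v then 1 else 0) * (\<Sum>x\<in>S. Y (h x)) ^ 4)
      = measure_pmf.expectation H' (\<lambda>h. (if h q = v then 1 else 0) * (\<Sum>x\<in>S. Y (h x)) ^ 4)"
    by (rule rH) (use S in \<open>simp add: r_def K_def\<close>)
  also have "\<dots> = (\<Sum>x4\<in>S. \<Sum>x3\<in>S. \<Sum>x2\<in>S. \<Sum>x1\<in>S. measure_pmf.expectation H' (tm x4 x3 x2 x1))"
    unfolding W by (rule E_sum4[OF fH'])
  also have "\<dots> = (\<Sum>x4\<in>S. \<Sum>x3\<in>S. \<Sum>x2\<in>S. \<Sum>x1\<in>S. measure_pmf.expectation PK (tm x4 x3 x2 x1))"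
  proof (intro sum.cong refl)
    fix x4 x3 x2 x1 assume x: "x4 \<in> S" "x3 \<in> S" "x2 \<in> S" "x1 \<in> S"
    have "measure_pmf.expectation H' (tm x4 x3 x2 x1) = measure_pmf.expectation H (tm x4 x3 x2 x1)"
      by (rule rH[symmetric]) (rule tmr[OF x])
    then show "measure_pmf.expectation H' (tm x4 x3 x2 x1) = measure_pmf.expectation PK (tm x4 x3 x2 x1)"
      using tmH[OF x] by simp
  qed
  also have "\<dots> = measure_pmf.expectation PK (\<lambda>h. (if h q = v then 1 else 0) * (\<Sum>x\<in>S. Y (h x)) ^ 4)"
    unfolding W by (rule E_sum4[OF fPK, symmetric])
  finally show ?thesis unfolding PK_def K_def .
qed

lemma lp_build_cong: "(\<And>x. x \<in> set xs \<Longrightarrow> h x = h' x) \<Longrightarrow> lp_build h xs = lp_build h' xs"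
proof (induction xs rule: rev_induct)
  case Nil then show ?case by (simp add: lp_build_def)
next
  case (snoc x xs)
  then have "lp_build h xs = lp_build h' xs" by simp
  moreover have "h x = h' x" using snoc.prems by simp
  ultimately show ?case by (simp add: lp_build_snoc lp_insert_def)
qed

lemma lp_cost_cong: "(\<And>x. x \<in> insert q (set xs) \<Longrightarrow> h x = h' x) \<Longrightarrow> lp_cost h xs q = lp_cost h' xs q"
  unfolding lp_cost_def using lp_build_cong[of xs h h'] by simp

definition pk :: "nat \<Rightarrow> nat \<Rightarrow> nat \<Rightarrow> real" where
  "pk t B k = real (card {y\<in>{..<t}. y div B = k}) / real t"

definition Yk :: "nat \<Rightarrow> nat \<Rightarrow> nat \<Rightarrow> nat \<Rightarrow> real" where
  "Yk t B k y = (if y div B = k then 1 else 0) - pk t B k"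

definition Phi :: "nat \<Rightarrow> nat set \<Rightarrow> nat \<Rightarrow> nat \<Rightarrow> nat \<Rightarrow> nat \<Rightarrow> (nat \<Rightarrow> nat) \<Rightarrow> real" where
  "Phi t S q l i r h = (if 2 ^ l < (24::nat) then 1 else
     (\<Sum>v<t. (if h q = v then 1 else 0) * (\<Sum>x\<in>S. Yk t (2 ^ l) (v div 2 ^ l - i + r) (h x)) ^ 4 / (real (2 ^ l) / 24) ^ 4))"

lemma Phi_nonneg: "0 \<le> Phi t S q l i r h"
  unfolding Phi_def by (auto intro!: sum_nonneg simp: zero_le_even_power)

lemma Ov_Phi:
  assumes hq: "h q < t" and load: "3 * length xs \<le> 2 * t" and ov: "Ov h xs q (2 ^ l) (h q div 2 ^ l - i + r)"
  shows "1 \<le> Phi t (set xs - {q}) q l i r h"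
proof (cases "2 ^ l < (24::nat)")
  case True then show ?thesis unfolding Phi_def by simp
next
  case False
  define B :: nat where "B = 2 ^ l"
  have B24: "24 \<le> B" using False unfolding B_def by simp
  define k where "k = h q div B - i + r"
  define S where "S = set xs - {q}"
  define c where "c = card {x\<in>S. h x div B = k}"
  have t0: "t > 0" using hq by simp
  have ovc: "3 * B < 4 * c + 4" using ov unfolding Ov_def c_def S_def k_def B_def by simp
  have Phi_eq: "Phi t S q l i r h = (\<Sum>x\<in>S. Yk t B k (h x)) ^ 4 / (real B / 24) ^ 4"
  proof -
    have "Phi t S q l i r h = (\<Sum>v<t. (if h q = v then 1 else 0) * (\<Sum>x\<in>S. Yk t B (v div B - i + r) (h x)) ^ 4 / (real B / 24) ^ 4)"
      unfolding Phi_def B_def using False by simp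
    also have "\<dots> = (\<Sum>v<t. (if v = h q then (\<Sum>x\<in>S. Yk t B (v div B - i + r) (h x)) ^ 4 / (real B / 24) ^ 4 else 0))"
      by (intro sum.cong) auto
    also have "\<dots> = (\<Sum>x\<in>S. Yk t B k (h x)) ^ 4 / (real B / 24) ^ 4"
      using hq unfolding k_def by (subst sum.delta) auto
    finally show ?thesis .
  qed
  have fS: "finite S" unfolding S_def by simp
  have sumY: "(\<Sum>x\<in>S. Yk t B k (h x)) = real c - real (card S) * pk t B k"
  proof -
    have "(\<Sum>x\<in>S. Yk t B k (h x)) = (\<Sum>x\<in>S. (if h x div B = k then 1 else 0)) - (\<Sum>x\<in>S. pk t B k)"
      unfolding Yk_def by (simp add: sum_subtractf)
    also have "(\<Sum>x\<in>S. (if h x div B = k then 1 else 0 :: real)) = real c"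
      unfolding c_def using fS by (simp add: sum.If_cases Int_def)
    finally show ?thesis by simp
  qed
  have "card {y\<in>{..<t}. y div B = k} \<le> card {k * B..<k * B + B}"
  proof (rule card_mono)
    show "{y\<in>{..<t}. y div B = k} \<subseteq> {k * B..<k * B + B}"
    proof
      fix y assume "y \<in> {y\<in>{..<t}. y div B = k}"
      then have "y div B = k" by simp
      then have e: "y = k * B + y mod B" by (metis div_mult_mod_eq)
      have "y mod B < B" using B24 by simp
      then have "k * B \<le> y \<and> y < k * B + B" using e by linarith
      then show "y \<in> {k * B..<k * B + B}" by simp
    qed
  qed simp
  then have pB: "pk t B k \<le> real B / real t" unfolding pk_def using t0 by (simp add: divide_right_mono)
  have cS: "card S \<le> length xs" unfolding S_def
    by (meson Diff_subset card_length card_mono le_trans List.finite_set)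
  have p0: "0 \<le> pk t B k" unfolding pk_def by simp
  have "real (card S) * pk t B k \<le> real (length xs) * (real B / real t)"
    using cS pB p0 by (intro mult_mono) auto
  also have "\<dots> \<le> 2 * real B / 3"
  proof -
    have "real (length xs) * real B \<le> 2 * real t * real B / 3" using load
      by (simp add: field_simps) (metis (mono_tags, opaque_lifting) mult.assoc mult.commute mult_le_mono1 of_nat_le_iff of_nat_mult of_nat_numeral)
    then show ?thesis using t0 by (simp add: field_simps)
  qed
  finally have np: "real (card S) * pk t B k \<le> 2 * real B / 3" .
  have "real B / 24 \<le> (\<Sum>x\<in>S. Yk t B k (h x))"
    unfolding sumY using np ovc B24 by linarith
  moreover have "0 < real B / 24" using B24 by simp
  ultimately have "(real B / 24) ^ 4 \<le> (\<Sum>x\<in>S. Yk t B k (h x)) ^ 4" by (intro power_mono) auto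
  moreover have "0 < (real B / 24) ^ 4" using B24 by simp
  ultimately have "1 \<le> (\<Sum>x\<in>S. Yk t B k (h x)) ^ 4 / (real B / 24) ^ 4"
    unfolding S_def by (simp add: le_divide_eq_1_pos)
  then have "1 \<le> Phi t S q l i r h" using Phi_eq by simp
  then show ?thesis by (simp add: S_def)
qed

lemma pointwise:
  assumes d: "distinct xs" and hq: "h q < t" and load: "3 * length xs \<le> 2 * t"
  shows "real (lp_cost h xs q) \<le> 5 + (\<Sum>l<length xs. 2 ^ (l + 3) * (\<Sum>i<9. \<Sum>r<4. Phi t (set xs - {q}) q l i r h))"
proof -
  have nn: "0 \<le> (\<Sum>l<length xs. 2 ^ (l + 3) * (\<Sum>i<9. \<Sum>r<4. Phi t (set xs - {q}) q l i r h))"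
    by (intro sum_nonneg mult_nonneg_nonneg) (auto intro: Phi_nonneg)
  note g = cost_geom[OF d, of h q]
  show ?thesis
  proof (cases "lp_cost h xs q \<le> 4")
    case True then show ?thesis using nn by simp
  next
    case False
    then obtain l i r where lir: "l < length xs" "i < 9" "r < 4" "lp_cost h xs q \<le> 2 ^ (l + 3)"
      "Ov h xs q (2 ^ l) (h q div 2 ^ l - i + r)" using g by blast
    have P1: "1 \<le> Phi t (set xs - {q}) q l i r h" by (rule Ov_Phi[OF hq load lir(5)])
    have "Phi t (set xs - {q}) q l i r h \<le> (\<Sum>r<4. Phi t (set xs - {q}) q l i r h)"
      using lir(3) by (intro member_le_sum) (auto intro: Phi_nonneg)
    also have "\<dots> \<le> (\<Sum>i<9. \<Sum>r<4. Phi t (set xs - {q}) q l i r h)"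
      using lir(2) by (intro member_le_sum[of i "{..<9}" "\<lambda>i. \<Sum>r<4. Phi t (set xs - {q}) q l i r h"])
        (auto intro!: sum_nonneg Phi_nonneg)
    finally have P2: "1 \<le> (\<Sum>i<9. \<Sum>r<4. Phi t (set xs - {q}) q l i r h)" using P1 by simp
    have "real (lp_cost h xs q) \<le> 2 ^ (l + 3)" using lir(4) by (metis of_nat_le_iff of_nat_numeral of_nat_power)
    also have "\<dots> \<le> 2 ^ (l + 3) * (\<Sum>i<9. \<Sum>r<4. Phi t (set xs - {q}) q l i r h)" using P2 by simp
    also have "\<dots> \<le> (\<Sum>l<length xs. 2 ^ (l + 3) * (\<Sum>i<9. \<Sum>r<4. Phi t (set xs - {q}) q l i r h))"
      using lir(1) by (intro member_le_sum[of l "{..<length xs}" "\<lambda>l. 2 ^ (l + 3) * (\<Sum>i<9. \<Sum>r<4. Phi t (set xs - {q}) q l i r h)"])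
        (auto intro!: sum_nonneg mult_nonneg_nonneg Phi_nonneg)
    finally show ?thesis by simp
  qed
qed

lemma np_bound:
  assumes cS: "card S \<le> n" and load: "3 * n \<le> 2 * t" and t0: "t > 0" and B0: "B > 0"
  shows "real (card S) * pk t B k \<le> 2 * real B / 3"
proof -
  have "card {y\<in>{..<t}. y div B = k} \<le> card {k * B..<k * B + B}"
  proof (rule card_mono)
    show "{y\<in>{..<t}. y div B = k} \<subseteq> {k * B..<k * B + B}"
    proof
      fix y assume "y \<in> {y\<in>{..<t}. y div B = k}"
      then have "y div B = k" by simp
      then have e: "y = k * B + y mod B" by (metis div_mult_mod_eq)
      have "y mod B < B" using B0 by simp
      then have "k * B \<le> y \<and> y < k * B + B" using e by linarith
      then show "y \<in> {k * B..<k * B + B}" by simp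
    qed
  qed simp
  then have pB: "pk t B k \<le> real B / real t" unfolding pk_def using t0 by (simp add: divide_right_mono)
  have p0: "0 \<le> pk t B k" unfolding pk_def by simp
  have "real (card S) * pk t B k \<le> real n * (real B / real t)"
    using cS pB p0 by (intro mult_mono) auto
  also have "\<dots> \<le> 2 * real B / 3"
  proof -
    have "3 * real n \<le> 2 * real t" using load by (metis of_nat_le_iff of_nat_mult of_nat_numeral)
    then have "3 * real n * real B \<le> 2 * real t * real B" by (intro mult_right_mono) auto
    then show ?thesis using t0 by (simp add: field_simps)
  qed
  finally show ?thesis .
qed

lemma Uv_bound:
  assumes t0: "t > 0"
  shows "measure_pmf.expectation (pmf_of_set {..<t}) (\<lambda>y. if y = v then 1 else 0) \<le> 1 / real t"
proof -
  have "measure_pmf.expectation (pmf_of_set {..<t}) (\<lambda>y. if y = v then 1 else (0::real)) =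
      (\<Sum>y<t. if y = v then 1 else 0) / real t"
    using t0 by (subst integral_pmf_of_set) auto
  also have "(\<Sum>y<t. if y = v then 1 else (0::real)) \<le> 1"
    by (simp add: sum.delta')
  then have "(\<Sum>y<t. if y = v then 1 else (0::real)) / real t \<le> 1 / real t"
    by (intro divide_right_mono) auto
  finally show ?thesis .
qed

lemma geo0: "(\<Sum>l<n. 8 * c / (2::real) ^ l) = 16 * c - 16 * c / 2 ^ n"
proof (induction n)
  case 0 then show ?case by simp
next
  case (Suc n)
  then show ?case by (simp add: field_simps)
qed

lemma geo1: "(2::real) ^ (l + 3) * (c / 4 ^ l) = 8 * c / 2 ^ l"
proof -
  have a: "(4::real) ^ l = 2 ^ l * 2 ^ l" by (metis power_mult_distrib mult_2 numeral_Bit0 one_add_one numeral_One)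
  have b: "(2::real) ^ (l + 3) = 8 * 2 ^ l" by (simp add: power_add)
  show ?thesis unfolding a b by (simp add: field_simps)
qed

lemma geo: "(\<Sum>l<n. (2::real) ^ (l + 3) * (c / 4 ^ l)) = 16 * c - 16 * c / 2 ^ n"
  unfolding geo1 by (rule geo0)

lemma Phi_exp:
  fixes H H' :: "(nat \<Rightarrow> nat) pmf" and rs :: "(nat \<Rightarrow> nat) \<Rightarrow> (nat \<Rightarrow> nat)"
  assumes ind: "k_independent 5 u t H" and supp: "\<forall>h\<in>set_pmf H. \<forall>x<u. h x < t"
    and u5: "5 \<le> u" and t0: "t > 0" and xsu: "set xs \<subseteq> {..<u}" and q: "q < u"
    and load: "3 * length xs \<le> 2 * t"
    and fH': "finite (set_pmf H')"
    and H'E: "\<And>G :: (nat \<Rightarrow> nat) \<Rightarrow> real. (\<And>h. G (rs h) = G h) \<Longrightarrow>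
        measure_pmf.expectation H G = measure_pmf.expectation H' G"
    and rsK: "\<And>h x. x \<in> insert q (set xs) \<Longrightarrow> rs h x = h x"
  shows "measure_pmf.expectation H' (Phi t (set xs - {q}) q l i r) \<le> (4 * 24 ^ 4) / 4 ^ l"
proof -
  define S where "S = set xs - {q}"
  define B :: nat where "B = 2 ^ l"
  have B0: "B > 0" unfolding B_def by simp
  have B2: "(4::real) ^ l = real B * real B"
    unfolding B_def by (simp flip: power_mult_distrib)
  have int: "\<And>f :: (nat \<Rightarrow> nat) \<Rightarrow> real. integrable (measure_pmf H') f"
    by (rule integrable_measure_pmf_finite[OF fH'])
  show ?thesis
  proof (cases "B < 24")
    case True
    then have "Phi t (set xs - {q}) q l i r = (\<lambda>_. 1)" unfolding Phi_def B_def by (simp add: fun_eq_iff)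
    then have E1: "measure_pmf.expectation H' (Phi t (set xs - {q}) q l i r) = 1" by simp
    have "real B * real B \<le> 24 * 24" using True by (intro mult_mono) auto
    then have "(4::real) ^ l \<le> 4 * 24 ^ 4" unfolding B2 by simp
    then have "1 \<le> (4 * 24 ^ 4) / (4::real) ^ l" by simp
    then show ?thesis using E1 by simp
  next
    case False
    define D :: real where "D = (real B / 24) ^ 4"
    have D0: "D > 0" unfolding D_def using B0 by simp
    define G where "G = (\<lambda>v (h::nat\<Rightarrow>nat). (if h q = v then 1 else 0) * (\<Sum>x\<in>S. Yk t B (v div B - i + r) (h x)) ^ 4)"
    have Phi_eq: "Phi t (set xs - {q}) q l i r = (\<lambda>h. \<Sum>v<t. G v h / D)"
      unfolding Phi_def G_def D_def S_def B_def using False B_def by (simp add: fun_eq_iff)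
    have EG: "measure_pmf.expectation H' (G v) \<le> (1 / real t) * (4 * real B ^ 2)" for v
    proof -
      define k where "k = v div B - i + r"
      define p where "p = pk t B k"
      have "measure_pmf.expectation H' (G v) = measure_pmf.expectation H (G v)"
        by (rule H'E[symmetric]) (use rsK in \<open>simp add: G_def S_def\<close>)
      also have "\<dots> = measure_pmf.expectation (Pi_pmf (insert q S) 0 (\<lambda>_. pmf_of_set {..<t})) (G v)"
        unfolding G_def by (rule Htransfer[OF ind supp u5 t0]) (use xsu q in \<open>auto simp: S_def\<close>)
      also have "\<dots> \<le> (1 / real t) * (card S * p + 3 * real (card S) ^ 2 * p ^ 2)"
      proof -
        have pE: "p = real (card {y\<in>{..<t}. y div B = k}) / real t" unfolding p_def pk_def by simp
        have YkE: "\<And>y. Yk t B k y = (if y div B = k then 1 else 0) - p"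
          by (simp add: Yk_def p_def)
        note uf = unif_facts[OF t0 B0, of k]
        have fU: "finite (set_pmf (pmf_of_set {..<t}))" using t0 by (subst set_pmf_of_set) auto
        show ?thesis unfolding G_def k_def[symmetric]
          by (rule condmom[OF fU uf(1)[folded pE, folded YkE] uf(2)[folded pE, folded YkE] uf(3)[folded pE, folded YkE] uf(4)[folded pE] Uv_bound[OF t0]])
             (auto simp: S_def)
      qed
      also have "\<dots> \<le> (1 / real t) * (4 * real B ^ 2)"
      proof (rule mult_left_mono)
        have cS: "card S \<le> length xs" unfolding S_def
          by (meson Diff_subset card_length card_mono le_trans List.finite_set)
        have x: "real (card S) * p \<le> 2 * real B / 3" unfolding p_def by (rule np_bound[OF cS load t0 B0])
        have x0: "0 \<le> real (card S) * p" unfolding p_def pk_def by simp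
        have "(real (card S) * p) ^ 2 \<le> (2 * real B / 3) ^ 2" using x x0 by (intro power_mono) auto
        then have "card S * p + 3 * real (card S) ^ 2 * p ^ 2 \<le> 2 * real B / 3 + 3 * (2 * real B / 3) ^ 2"
          using x by (simp add: power_mult_distrib)
        also have "\<dots> \<le> 4 * real B ^ 2" using B0 by (simp add: power2_eq_square field_simps)
        finally show "card S * p + 3 * real (card S) ^ 2 * p ^ 2 \<le> 4 * real B ^ 2" .
      qed simp
      finally show ?thesis .
    qed
    have "measure_pmf.expectation H' (Phi t (set xs - {q}) q l i r) = (\<Sum>v<t. measure_pmf.expectation H' (G v) / D)"
      unfolding Phi_eq using int by simp
    also have "\<dots> \<le> (\<Sum>v<t. (1 / real t) * (4 * real B ^ 2) / D)"
      using EG D0 by (intro sum_mono divide_right_mono) auto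
    also have "\<dots> = 4 * real B ^ 2 / D" using t0 by simp
    also have "\<dots> = (4 * 24 ^ 4) / 4 ^ l" unfolding D_def B2 using B0
      by (simp add: power2_eq_square power_divide field_simps power4_eq_xxxx)
    finally show ?thesis .
  qed
qed

theorem theorem6:
  "\<exists>C::real. \<forall>(H :: (nat \<Rightarrow> nat) pmf) u t xs q.
      k_independent 5 u t H \<longrightarrow>
      (\<forall>h\<in>set_pmf H. \<forall>x<u. h x < t) \<longrightarrow>
      (\<exists>k. t = 2 ^ k) \<longrightarrow>
      distinct xs \<longrightarrow> set xs \<subseteq> {..<u} \<longrightarrow>
      2 * real t \<ge> 3 * real (length xs) \<longrightarrow>
      q < u \<longrightarrow>
      measure_pmf.expectation H (\<lambda>h. real (lp_cost h xs q)) \<le> C"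
proof (intro exI[of _ "5 + 576 * (4 * 24 ^ 4)"] allI impI)
  fix H :: "(nat \<Rightarrow> nat) pmf" and u t xs q
  assume ind: "k_independent 5 u t H" and supp: "\<forall>h\<in>set_pmf H. \<forall>x<u. h x < t"
    and tp: "\<exists>k. t = 2 ^ k" and d: "distinct xs" and xsu: "set xs \<subseteq> {..<u}"
    and loadr: "2 * real t \<ge> 3 * real (length xs)" and q: "q < u"
  have t0: "t > 0" using tp by auto
  have load: "3 * length xs \<le> 2 * t" using loadr by linarith
  define K where "K = insert q (set xs)"
  define rs where "rs = (\<lambda>(h::nat\<Rightarrow>nat) x. if x \<in> K then h x else 0)"
  define H' where "H' = map_pmf rs H"
  have Ku: "K \<subseteq> {..<u}" "finite K" unfolding K_def using xsu q by auto
  have fH': "finite (set_pmf H')"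
  proof -
    have "set_pmf H' \<subseteq> PiE_dflt K 0 (\<lambda>_. {..<t})"
    proof
      fix g assume "g \<in> set_pmf H'"
      then obtain h where h: "h \<in> set_pmf H" "g = rs h" unfolding H'_def by auto
      then show "g \<in> PiE_dflt K 0 (\<lambda>_. {..<t})"
        using supp Ku(1) unfolding PiE_dflt_def rs_def by auto
    qed
    moreover have "finite (PiE_dflt K 0 (\<lambda>_. {..<t}))" using Ku(2) by (intro finite_PiE_dflt) auto
    ultimately show ?thesis by (rule finite_subset)
  qed
  have int: "\<And>f :: (nat \<Rightarrow> nat) \<Rightarrow> real. integrable (measure_pmf H') f"
    by (rule integrable_measure_pmf_finite[OF fH'])
  have H'E: "\<And>G :: (nat \<Rightarrow> nat) \<Rightarrow> real. (\<And>h. G (rs h) = G h) \<Longrightarrow>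
        measure_pmf.expectation H G = measure_pmf.expectation H' G"
    unfolding H'_def by simp
  have rsK: "\<And>h x. x \<in> insert q (set xs) \<Longrightarrow> rs h x = h x" unfolding rs_def K_def by simp
  have hq: "\<And>h. h \<in> set_pmf H' \<Longrightarrow> h q < t"
  proof -
    fix h assume "h \<in> set_pmf H'"
    then obtain h0 where "h0 \<in> set_pmf H" "h = rs h0" unfolding H'_def by auto
    then show "h q < t" using supp q rsK[of q h0] by simp
  qed
  have E0: "measure_pmf.expectation H (\<lambda>h. real (lp_cost h xs q)) = measure_pmf.expectation H' (\<lambda>h. real (lp_cost h xs q))"
    by (rule H'E) (metis lp_cost_cong rsK)
  show "measure_pmf.expectation H (\<lambda>h. real (lp_cost h xs q)) \<le> 5 + 576 * (4 * 24 ^ 4)"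
  proof (cases "u < 5")
    case True
    have "length xs = card (set xs)" using d by (simp add: distinct_card)
    also have "\<dots> \<le> card {..<u}" using xsu by (intro card_mono) auto
    finally have n4: "length xs \<le> 4" using True by simp
    have "measure_pmf.expectation H' (\<lambda>h. real (lp_cost h xs q)) \<le> measure_pmf.expectation H' (\<lambda>h. 5)"
    proof (rule integral_mono_AE')
      show "integrable (measure_pmf H') (\<lambda>h. 5 :: real)" by simp
      show "AE h in measure_pmf H'. real (lp_cost h xs q) \<le> 5"
        using cost_geom[OF d] n4 by (auto intro!: AE_I2) (metis add_le_mono1 le_trans numeral_le_iff numerals(1) semiring_norm(68) semiring_norm(69) Suc_eq_plus1 eval_nat_numeral(3))
      show "AE h in measure_pmf H'. 0 \<le> (5::real)" by simp
    qed
    then show ?thesis using E0 by simp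
  next
    case False
    then have u5: "5 \<le> u" by simp
    define Bd where "Bd = (\<lambda>h. 5 + (\<Sum>l<length xs. 2 ^ (l + 3) * (\<Sum>i<9. \<Sum>r<4. Phi t (set xs - {q}) q l i r h)))"
    have "measure_pmf.expectation H' (\<lambda>h. real (lp_cost h xs q)) \<le> measure_pmf.expectation H' Bd"
    proof (rule integral_mono_AE')
      show "integrable (measure_pmf H') Bd" by (rule int)
      show "AE h in measure_pmf H'. real (lp_cost h xs q) \<le> Bd h"
        unfolding AE_measure_pmf_iff Bd_def
      proof
        fix h assume "h \<in> set_pmf H'"
        then show "real (lp_cost h xs q) \<le> 5 + (\<Sum>l<length xs. 2 ^ (l + 3) * (\<Sum>i<9. \<Sum>r<4. Phi t (set xs - {q}) q l i r h))"
          by (intro pointwise[OF d _ load] hq)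
      qed
      show "AE h in measure_pmf H'. 0 \<le> Bd h"
        unfolding Bd_def by (intro AE_I2 add_nonneg_nonneg sum_nonneg mult_nonneg_nonneg) (auto intro: Phi_nonneg)
    qed
    also have "measure_pmf.expectation H' Bd = 5 + (\<Sum>l<length xs. 2 ^ (l + 3) * (\<Sum>i<9. \<Sum>r<4.
        measure_pmf.expectation H' (Phi t (set xs - {q}) q l i r)))"
      unfolding Bd_def using int by simp
    also have "\<dots> \<le> 5 + (\<Sum>l<length xs. 2 ^ (l + 3) * (\<Sum>i<(9::nat). \<Sum>r<(4::nat). (4 * 24 ^ 4) / 4 ^ l))"
      by (intro add_left_mono sum_mono mult_left_mono Phi_exp[where rs=rs and H'=H', OF ind supp u5 t0 xsu q load fH' H'E rsK]) auto
    also have "\<dots> = 5 + (\<Sum>l<length xs. (2::real) ^ (l + 3) * ((36 * (4 * 24 ^ 4)) / 4 ^ l))"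
      by simp
    also have "\<dots> = 5 + (16 * (36 * (4 * 24 ^ 4)) - 16 * (36 * (4 * 24 ^ 4)) / 2 ^ length xs)"
      by (simp only: geo)
    also have "\<dots> \<le> 5 + 576 * (4 * 24 ^ 4)" by simp
    finally show ?thesis using E0 by simp
  qed
qed

end
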